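(* Let $\mathbb{I}=(I_n:n\in\omega)$ and $\mathbb{J}=(J_k:k\in\omega)$ be interval partitions of $\omega$ and $x,y\in 2^\omega$, and suppose $|J_k|\ge 2$ for every $k$. Then the following are equivalent: (1) $\mathrm{Match}(x,\mathbb{I})\not\subseteq\mathrm{Match}(y,\mathbb{J})$; (2) $|\mathrm{Match}(x,\mathbb{I})\setminus\mathrm{Match}(y,\mathbb{J})|=\mathfrak{c}$; (3) there are infinitely many $n$ such that for every $k$, either $J_k\not\subseteq I_n$ or $x\restriction J_k\neq y\restriction J_k$.
   Context: An interval partition of $\omega$ is a sequence of consecutive finite nonempty intervals covering $\omega$. For an interval partition $\mathbb{I}=(I_n)$ and $x\in2^\omega$, $\mathrm{Match}(x,\mathbb{I})=\{y\in 2^\omega : x\restriction I_n=y\restriction I_n \text{ for infinitely many } n\}$. $\mathfrak{c}=2^{\aleph_0}$. *)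

theory Defs
  imports Main "HOL-Library.Equipollence"
begin

definition interval_partition :: "(nat \<Rightarrow> nat set) \<Rightarrow> bool" where
  "interval_partition I \<longleftrightarrow>
     (\<exists>a :: nat \<Rightarrow> nat. a 0 = 0 \<and> strict_mono a \<and> (\<forall>n. I n = {a n..<a (Suc n)}))"

definition Match :: "(nat \<Rightarrow> bool) \<Rightarrow> (nat \<Rightarrow> nat set) \<Rightarrow> (nat \<Rightarrow> bool) set" where
  "Match x I = {y. infinite {n. \<forall>i\<in>I n. x i = y i}}"

end

theory Submission
  imports Defs Complex_Main "HOL-Library.Infinite_Set"
begin

lemma part_unique:
  assumes "strict_mono (a::nat\<Rightarrow>nat)" "a n \<le> p" "p < a (Suc n)" "a m \<le> p" "p < a (Suc m)"
  shows "n = m"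
proof (rule ccontr)
  assume "n \<noteq> m"
  then consider "Suc n \<le> m" | "Suc m \<le> n" by linarith
  then show False
  proof cases
    case 1 then have "a (Suc n) \<le> a m" using assms(1) by (simp add: strict_mono_less_eq)
    then show False using assms by linarith
  next
    case 2 then have "a (Suc m) \<le> a n" using assms(1) by (simp add: strict_mono_less_eq)
    then show False using assms by linarith
  qed
qed

lemma construct:
  fixes a b :: "nat \<Rightarrow> nat" and x y :: "nat \<Rightarrow> bool" and G :: "nat set"
  assumes sa: "strict_mono a" and sb: "strict_mono b"
    and b2: "\<And>k. b k + 2 \<le> b (Suc k)"
    and Gi: "infinite G"
    and good: "\<And>n k. n \<in> G \<Longrightarrow> {b k..<b (Suc k)} \<subseteq> {a n..<a (Suc n)} \<Longrightarrow> \<exists>i\<in>{b k..<b (Suc k)}. x i \<noteq> y i"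
  shows "\<exists>Z::(nat\<Rightarrow>bool)\<Rightarrow>nat\<Rightarrow>bool. inj Z \<and> (\<forall>f. infinite {n. \<forall>i\<in>{a n..<a (Suc n)}. x i = Z f i} \<and> (\<forall>k. \<exists>i\<in>{b k..<b (Suc k)}. y i \<noteq> Z f i))"
proof -
  define nG where "nG m = (LEAST n. n \<in> G \<and> m \<le> a n)" for m
  define nK where "nK m = (LEAST k. m \<le> b k)" for m
  have exG: "\<exists>n. n \<in> G \<and> m \<le> a n" for m
  proof -
    obtain n where "n \<in> G" "m \<le> n" using Gi by (meson infinite_nat_iff_unbounded_le)
    moreover have "n \<le> a n" using sa by (simp add: seq_suble)
    ultimately show ?thesis by (intro exI[of _ n]) simp
  qed
  have nG: "nG m \<in> G \<and> m \<le> a (nG m)" for m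
    unfolding nG_def using exG[of m] by (rule LeastI_ex)
  have nK: "m \<le> b (nK m)" for m
    unfolding nK_def by (rule LeastI_ex) (use seq_suble[OF sb, of m] in blast)
  define g where "g = rec_nat (nG 0) (\<lambda>_ gi. nG (b (Suc (nK (a (Suc gi))))))"
  define k where "k i = nK (a (Suc (g i)))" for i
  have gS: "g (Suc i) = nG (b (Suc (k i)))" for i by (simp add: g_def k_def)
  have gG: "g i \<in> G" for i by (cases i) (simp_all add: g_def nG)
  have F1: "a (Suc (g i)) \<le> b (k i)" for i using nK k_def by simp
  have F2: "b (Suc (k i)) \<le> a (g (Suc i))" for i using nG gS by simp
  have gm: "Suc (g i) < g (Suc i)" for i
  proof -
    have "b (k i) < b (Suc (k i))" using sb by (simp add: strict_mono_less)
    then have "a (Suc (g i)) < a (g (Suc i))" using F1 F2 by (meson le_less_trans less_le_trans)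
    then show ?thesis using sa by (simp add: strict_mono_less)
  qed
  have km: "k i < k (Suc i)" for i
  proof -
    have "b (k i) < b (Suc (k i))" using sb by (simp add: strict_mono_less)
    moreover have "a (g (Suc i)) < a (Suc (g (Suc i)))" using sa by (simp add: strict_mono_less)
    ultimately have "b (k i) < b (k (Suc i))" using F1[of "Suc i"] F2[of i] by linarith
    then show ?thesis using sb by (simp add: strict_mono_less)
  qed
  have sg: "strict_mono g" unfolding strict_mono_Suc_iff using gm by (meson Suc_lessD)
  have sk: "strict_mono k" unfolding strict_mono_Suc_iff using km by blast
  have disj: False if "a (g i) \<le> p" "p < a (Suc (g i))" "b (k j) \<le> p" "p < b (Suc (k j))" for i j p
  proof (cases "i \<le> j")
    case True
    then have "b (k i) \<le> b (k j)" using sb sk by (simp add: strict_mono_less_eq)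
    then show False using F1[of i] that by linarith
  next
    case False
    then have "g (Suc j) \<le> g i" using sg by (simp add: strict_mono_less_eq)
    then have "a (g (Suc j)) \<le> a (g i)" using sa by (simp add: strict_mono_less_eq)
    then show False using F2[of j] that by linarith
  qed
  define C where "C p = (\<exists>i. a (g i) \<le> p \<and> p < a (Suc (g i)))" for p
  have nonadj: "\<not> C p" if "a (Suc (g i)) \<le> p" "p < a (Suc (Suc (g i)))" for i p
  proof
    assume "C p"
    then obtain j where j: "a (g j) \<le> p" "p < a (Suc (g j))" unfolding C_def by blast
    have "g j = Suc (g i)" using part_unique[OF sa j that] .
    moreover have "g j \<le> g i \<or> g (Suc i) \<le> g j"
    proof (cases "j \<le> i")
      case True then show ?thesis using sg by (simp add: strict_mono_less_eq)
    next
      case False then have "Suc i \<le> j" by simp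
      then show ?thesis using sg by (simp add: strict_mono_less_eq)
    qed
    ultimately show False using gm[of i] by linarith
  qed
  have bkinj: "b (k i) = b (k j) \<longleftrightarrow> i = j" for i j
    using sb sk by (simp add: strict_mono_eq)
  have codeC: "\<not> C (b (k j))" for j
  proof
    assume "C (b (k j))"
    then obtain i where "a (g i) \<le> b (k j)" "b (k j) < a (Suc (g i))" unfolding C_def by blast
    moreover have "b (k j) < b (Suc (k j))" using sb by (simp add: strict_mono_less)
    ultimately show False using disj by blast
  qed
  define Z where "Z f p = (if C p then x p else if (\<exists>i. p = b (k i)) then (\<exists>i. p = b (k i) \<and> f i) else \<not> y p)" for f p
  have Zc: "Z f (b (k j)) = f j" for f j
    using codeC[of j] bkinj unfolding Z_def by auto
  have "inj Z"
  proof (rule injI)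
    fix f f' assume "Z f = Z f'"
    then have "f j = f' j" for j using Zc by metis
    then show "f = f'" by blast
  qed
  moreover have "infinite {n. \<forall>i\<in>{a n..<a (Suc n)}. x i = Z f i}" for f
  proof -
    have "range g \<subseteq> {n. \<forall>i\<in>{a n..<a (Suc n)}. x i = Z f i}"
      unfolding Z_def C_def by auto
    moreover have "infinite (range g)"
      using sg by (simp add: range_inj_infinite strict_mono_imp_inj_on)
    ultimately show ?thesis using infinite_super by blast
  qed
  moreover have "\<exists>p\<in>{b kk..<b (Suc kk)}. y p \<noteq> Z f p" for f kk
  proof (cases "kk \<in> range k")
    case True
    then obtain j where j: "kk = k j" by blast
    define p where "p = b (Suc kk) - 1"
    have pJ: "b kk < p" "p < b (Suc kk)" using b2[of kk] p_def by auto
    have "\<not> C p"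
    proof
      assume "C p"
      then obtain i where "a (g i) \<le> p" "p < a (Suc (g i))" unfolding C_def by blast
      then show False using disj[of i p j] pJ j by simp
    qed
    moreover have "\<not> (\<exists>i. p = b (k i))"
    proof
      assume "\<exists>i. p = b (k i)"
      then obtain i where i: "p = b (k i)" by blast
      have "kk < k i" using pJ i sb by (simp add: strict_mono_less)
      moreover have "k i < Suc kk" using pJ i sb by (simp add: strict_mono_less)
      ultimately show False by linarith
    qed
    ultimately show ?thesis using pJ unfolding Z_def by (intro bexI[of _ p]) auto
  next
    case False
    have nc: "\<not> (\<exists>i. p = b (k i))" if "p \<in> {b kk..<b (Suc kk)}" for p
    proof
      assume "\<exists>i. p = b (k i)"
      then obtain i where i: "p = b (k i)" by blast
      have "b (k i) < b (Suc (k i))" using sb by (simp add: strict_mono_less)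
      then have "kk = k i" using part_unique[OF sb, of kk p "k i"] that i by auto
      then show False using False by blast
    qed
    have bk: "b kk < b (Suc kk)" using sb by (simp add: strict_mono_less)
    show ?thesis
    proof (cases "C (b kk)")
      case False
      then show ?thesis using nc[of "b kk"] bk unfolding Z_def by (intro bexI[of _ "b kk"]) auto
    next
      case True
      then obtain i where i: "a (g i) \<le> b kk" "b kk < a (Suc (g i))" unfolding C_def by blast
      show ?thesis
      proof (cases "b (Suc kk) \<le> a (Suc (g i))")
        case True
        then have "{b kk..<b (Suc kk)} \<subseteq> {a (g i)..<a (Suc (g i))}" using i by auto
        then obtain p where p: "p \<in> {b kk..<b (Suc kk)}" "x p \<noteq> y p" using good[OF gG] by blast
        have "a (g i) \<le> p \<and> p < a (Suc (g i))" using i True p(1) by simp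
        then have "C p" unfolding C_def by blast
        then show ?thesis using p unfolding Z_def by auto
      next
        case False
        define p where "p = a (Suc (g i))"
        have "p < a (Suc (Suc (g i)))" using sa p_def by (simp add: strict_mono_less)
        then have "\<not> C p" using nonadj p_def by blast
        moreover have "p \<in> {b kk..<b (Suc kk)}" using i False p_def by auto
        ultimately show ?thesis using nc[of p] unfolding Z_def by auto
      qed
    qed
  qed
  ultimately show ?thesis by blast
qed

theorem mainTheorem13:
  fixes I J :: "nat \<Rightarrow> nat set" and x y :: "nat \<Rightarrow> bool"
  assumes "interval_partition I" and "interval_partition J"
    and "\<And>k. card (J k) \<ge> 2"
  shows "(\<not> Match x I \<subseteq> Match y J
            \<longleftrightarrow> Match x I - Match y J \<approx> (UNIV :: (nat \<Rightarrow> bool) set))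
       \<and> (\<not> Match x I \<subseteq> Match y J
            \<longleftrightarrow> infinite {n. \<forall>k. \<not> J k \<subseteq> I n \<or> (\<exists>i\<in>J k. x i \<noteq> y i)})"
proof -
  obtain a where a: "a 0 = 0" "strict_mono a" "\<And>n. I n = {a n..<a (Suc n)}"
    using assms(1) unfolding interval_partition_def by blast
  obtain b where b: "b 0 = 0" "strict_mono b" "\<And>n. J n = {b n..<b (Suc n)}"
    using assms(2) unfolding interval_partition_def by blast
  have b2: "b k + 2 \<le> b (Suc k)" for k using assms(3)[of k] b(3)[of k] by simp
  define G where "G = {n. \<forall>k. \<not> J k \<subseteq> I n \<or> (\<exists>i\<in>J k. x i \<noteq> y i)}"
  define D where "D = Match x I - Match y J"
  have goodG: "\<exists>i\<in>{b k..<b (Suc k)}. x i \<noteq> y i"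
    if "n \<in> G" "{b k..<b (Suc k)} \<subseteq> {a n..<a (Suc n)}" for n k
    using that unfolding G_def a(3) b(3) by blast
  have c32: "D \<approx> (UNIV :: (nat\<Rightarrow>bool) set)" if iG: "infinite G"
  proof -
    have "\<exists>Z::(nat\<Rightarrow>bool)\<Rightarrow>nat\<Rightarrow>bool. inj Z \<and> (\<forall>f. infinite {n. \<forall>i\<in>{a n..<a (Suc n)}. x i = Z f i} \<and> (\<forall>k. \<exists>i\<in>{b k..<b (Suc k)}. y i \<noteq> Z f i))"
      by (rule construct[OF a(2) b(2) b2 iG]) (rule goodG)
    then obtain Z :: "(nat\<Rightarrow>bool)\<Rightarrow>nat\<Rightarrow>bool" where Z1: "inj Z"
      and Z23: "\<forall>f. infinite {n. \<forall>i\<in>{a n..<a (Suc n)}. x i = Z f i} \<and> (\<forall>k. \<exists>i\<in>{b k..<b (Suc k)}. y i \<noteq> Z f i)"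
      by (elim exE conjE)
    have Z: "inj Z"
      "\<And>f. infinite {n. \<forall>i\<in>{a n..<a (Suc n)}. x i = Z f i}"
      "\<And>f k. \<exists>i\<in>{b k..<b (Suc k)}. y i \<noteq> Z f i"
      using Z1 Z23 by auto
    have "range Z \<subseteq> D"
    proof
      fix z assume "z \<in> range Z"
      then obtain f where f: "z = Z f" by blast
      have "z \<in> Match x I" unfolding Match_def a(3) using Z(2) f by simp
      have e: "{n. \<forall>i\<in>J n. y i = z i} = {}" unfolding b(3) using Z(3) f by blast
      have "finite {n. \<forall>i\<in>J n. y i = z i}" by (rule ssubst[OF e]) (rule finite.emptyI)
      then have "z \<notin> Match y J" unfolding Match_def by simp
      with \<open>z \<in> Match x I\<close> show "z \<in> D" unfolding D_def by blast
    qed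
    then have "(UNIV :: (nat\<Rightarrow>bool) set) \<lesssim> D" unfolding lepoll_def using Z(1) by blast
    moreover have "D \<lesssim> (UNIV :: (nat\<Rightarrow>bool) set)" by (rule subset_imp_lepoll) simp
    ultimately show ?thesis by (simp add: lepoll_antisym)
  qed
  have c13: "Match x I \<subseteq> Match y J" if fG: "finite G"
  proof
    fix z assume z: "z \<in> Match x I"
    obtain m where m: "\<forall>n\<in>G. n \<le> m" using fG unfolding finite_nat_set_iff_bounded_le by (elim exE)
    define S where "S = {n. \<forall>i\<in>I n. x i = z i} - {..m}"
    have zi: "infinite {n. \<forall>i\<in>I n. x i = z i}" using z unfolding Match_def by simp
    have "infinite S" unfolding S_def by (rule Diff_infinite_finite[OF finite_atMost zi])
    have ex: "\<exists>kk. J kk \<subseteq> I n \<and> (\<forall>i\<in>J kk. x i = y i)" if "n \<in> S" for n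
    proof -
      have "n > m" using that unfolding S_def by simp
      then have "n \<notin> G" using m by (meson not_le)
      then show ?thesis unfolding G_def by blast
    qed
    define h where "h n = (SOME kk. J kk \<subseteq> I n \<and> (\<forall>i\<in>J kk. x i = y i))" for n
    have h: "J (h n) \<subseteq> I n \<and> (\<forall>i\<in>J (h n). x i = y i)" if "n \<in> S" for n
      unfolding h_def using ex[OF that] by (rule someI_ex)
    have Jne: "b kk \<in> J kk" for kk using b2[of kk] b(3) by simp
    have "inj_on h S"
    proof
      fix n n' assume nn: "n \<in> S" "n' \<in> S" "h n = h n'"
      have "b (h n) \<in> I n" using h[OF nn(1)] Jne[of "h n"] by (meson subsetD)
      moreover have "b (h n') \<in> I n'" using h[OF nn(2)] Jne[of "h n'"] by (meson subsetD)
      ultimately have "b (h n) \<in> I n" "b (h n) \<in> I n'" using nn(3) by simp_all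
      then show "n = n'" using part_unique[OF a(2), of n "b (h n)" n'] unfolding a(3) by simp
    qed
    then have hS: "infinite (h ` S)" using \<open>infinite S\<close> finite_imageD by (meson)
    have "h ` S \<subseteq> {n. \<forall>i\<in>J n. y i = z i}"
    proof
      fix kk assume "kk \<in> h ` S"
      then obtain n where n: "n \<in> S" "kk = h n" by blast
      have "\<forall>i\<in>I n. x i = z i" using n(1) unfolding S_def by simp
      then show "kk \<in> {n. \<forall>i\<in>J n. y i = z i}" using h[OF n(1)] n(2) by fastforce
    qed
    then have "infinite {n. \<forall>i\<in>J n. y i = z i}" using hS by (rule infinite_super)
    then show "z \<in> Match y J" unfolding Match_def by simp
  qed
  have c21: "\<not> Match x I \<subseteq> Match y J" if "D \<approx> (UNIV :: (nat\<Rightarrow>bool) set)"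
  proof
    assume "Match x I \<subseteq> Match y J"
    then have "D = {}" unfolding D_def by blast
    then show False using that unfolding eqpoll_def bij_betw_def by auto
  qed
  have P: "(\<not> Match x I \<subseteq> Match y J \<longleftrightarrow> D \<approx> (UNIV :: (nat\<Rightarrow>bool) set))
       \<and> (\<not> Match x I \<subseteq> Match y J \<longleftrightarrow> infinite G)"
  proof (intro conjI iffI)
    assume "\<not> Match x I \<subseteq> Match y J"
    then have "infinite G" using c13 by blast
    then show "D \<approx> (UNIV :: (nat\<Rightarrow>bool) set)" by (rule c32)
  next
    assume "D \<approx> (UNIV :: (nat\<Rightarrow>bool) set)"
    then show "\<not> Match x I \<subseteq> Match y J" by (rule c21)
  next
    assume "\<not> Match x I \<subseteq> Match y J"
    then show "infinite G" using c13 by blast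
  next
    assume "infinite G"
    then show "\<not> Match x I \<subseteq> Match y J" by (intro c21 c32)
  qed
  then show ?thesis unfolding D_def G_def .
qed

end
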